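(* Let $\alpha,\beta\in L^2(\log L)^{1/4}(\mathbb{R}^2)$. Then $\alpha\beta\in L(\log L)^{1/2}(\mathbb{R}^2)$ and \[\|\alpha\beta\|_{1,1/2}\le 4\left(\max\{\|\alpha\|_{2,1/4},\|\beta\|_{2,1/4}\}\right)^2.\]
   Context: For $1\le p<\infty$ and $a\in\mathbb{R}$ let $A_{p,a}(s)=[s\log^a(2+s)]^p$ for $s>0$. The Zygmund space $L^p(\log L)^a(\mathbb{R}^2)$ is the set of $f\in L^1_{loc}(\mathbb{R}^2)$ with $\int_{\mathbb{R}^2}A_{p,a}(|f(x)|)\,dx<\infty$, normed by the Luxemburg norm $\|f\|_{p,a}=\inf\{k>0:\int A_{p,a}(|f(x)|/k)\,dx\le1\}$. $L(\log L)^{1/2}$ denotes $L^1(\log L)^{1/2}$. *)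

theory Defs
  imports "HOL-Analysis.Analysis"
begin

definition zyg_A :: "real \<Rightarrow> real \<Rightarrow> real \<Rightarrow> real" where
  "zyg_A p a s = (s * (ln (2 + s)) powr a) powr p"

definition in_zygmund :: "real \<Rightarrow> real \<Rightarrow> (real^2 \<Rightarrow> real) \<Rightarrow> bool" where
  "in_zygmund p a f \<longleftrightarrow>
     f \<in> borel_measurable lebesgue \<and>
     (\<forall>K. compact K \<longrightarrow> set_integrable lebesgue K f) \<and>
     (\<integral>\<^sup>+ x. ennreal (zyg_A p a \<bar>f x\<bar>) \<partial>lebesgue) < \<infinity>"

definition zyg_norm :: "real \<Rightarrow> real \<Rightarrow> (real^2 \<Rightarrow> real) \<Rightarrow> real" where
  "zyg_norm p a f = Inf {k. k > 0 \<and> (\<integral>\<^sup>+ x. ennreal (zyg_A p a (\<bar>f x\<bar> / k)) \<partial>lebesgue) \<le> 1}"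

end

theory Submission
  imports Defs
begin

definition B2 :: "real \<Rightarrow> real" where "B2 s = s^2 * sqrt (ln (2 + s))"

lemma A2_eq: "s \<ge> 0 \<Longrightarrow> zyg_A 2 (1/4) s = B2 s"
proof -
  assume s: "s \<ge> 0"
  have L: "ln (2+s) > 0" using s by simp
  have "zyg_A 2 (1/4) s = (s * ln (2+s) powr (1/4))^2"
    unfolding zyg_A_def using s L by (simp del: powr_numeral add: powr_numeral[symmetric])
  also have "\<dots> = s^2 * (ln (2+s) powr (1/4))^2" by (simp add: power_mult_distrib)
  also have "(ln (2+s) powr (1/4))^2 = ln (2+s) powr (1/2)"
    using L by (simp add: powr_powr[symmetric] powr_realpow[symmetric] powr_powr)
  also have "\<dots> = sqrt (ln (2+s))" using L by (simp add: powr_half_sqrt)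
  finally show ?thesis by (simp add: B2_def)
qed

lemma A1_eq: "s \<ge> 0 \<Longrightarrow> zyg_A 1 (1/2) s = s * sqrt (ln (2 + s))"
proof -
  assume s: "s \<ge> 0"
  have L: "ln (2+s) > 0" using s by simp
  show ?thesis unfolding zyg_A_def using s L by (simp add: powr_half_sqrt)
qed

lemma B2_mono: "0 \<le> s \<Longrightarrow> s \<le> t \<Longrightarrow> B2 s \<le> B2 t"
  unfolding B2_def
  by (intro mult_mono power_mono real_sqrt_le_mono) auto

lemma B2_scale: assumes "0 \<le> s" "1 \<le> k" shows "B2 (s/k) \<le> B2 s / k^2"
proof -
  have "sqrt (ln (2 + s/k)) \<le> sqrt (ln (2+s))"
  proof -
    have "s \<le> s * k" using assms mult_left_mono[of 1 k s] by simp
    then have "s/k \<le> s" using assms by (simp add: divide_le_eq)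
    moreover have "0 \<le> s/k" using assms by simp
    ultimately show ?thesis by (intro real_sqrt_le_mono) (subst ln_le_cancel_iff, auto)
  qed
  then have "(s/k)^2 * sqrt (ln (2 + s/k)) \<le> (s/k)^2 * sqrt (ln (2+s))"
    by (intro mult_left_mono) auto
  then show ?thesis unfolding B2_def by (simp add: power_divide)
qed

lemma key0: assumes "0 \<le> u" "u \<le> v"
  shows "u * v * sqrt (ln (2 + u * v)) \<le> 2 * B2 v"
proof -
  have uv: "u * v \<le> v^2" using assms by (simp add: power2_eq_square mult_right_mono)
  have "ln (2 + u * v) \<le> ln ((2+v)^2)"
  proof -
    have p: "0 \<le> u * v" using assms by simp
    have q: "2 + u * v \<le> (2+v)^2" using uv assms by (simp add: power2_eq_square algebra_simps)
    show ?thesis using p q by (subst ln_le_cancel_iff) auto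
  qed
  also have "\<dots> = 2 * ln (2+v)" using assms by (simp add: ln_realpow)
  finally have "sqrt (ln (2 + u * v)) \<le> sqrt 2 * sqrt (ln (2+v))"
    by (metis real_sqrt_le_mono real_sqrt_mult)
  also have "\<dots> \<le> 2 * sqrt (ln (2+v))"
    using real_le_lsqrt[of 2 2] assms by (intro mult_right_mono) auto
  finally have "u * v * sqrt (ln (2 + u * v)) \<le> v^2 * (2 * sqrt (ln (2+v)))"
    using assms uv by (intro mult_mono) auto
  then show ?thesis by (simp add: B2_def)
qed

lemma B2_nonneg: "0 \<le> s \<Longrightarrow> 0 \<le> B2 s" by (simp add: B2_def)

lemma key: assumes "0 \<le> u" "0 \<le> v"
  shows "u * v * sqrt (ln (2 + u * v)) \<le> 2 * (B2 u + B2 v)"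
proof (cases "u \<le> v")
  case True
  then show ?thesis using key0[OF assms(1) True] B2_nonneg[OF assms(1)] unfolding distrib_left by linarith
next
  case False
  then show ?thesis using key0[of v u] B2_nonneg[of v] assms by (simp add: mult.commute)
qed

lemma sq_le: "a^2 \<le> 2 * B2 \<bar>a\<bar>"
proof -
  have "ln 2 \<le> ln (2 + \<bar>a\<bar>)" by simp
  then have "1/4 \<le> ln (2 + \<bar>a\<bar>)" using ln2_ge_two_thirds by linarith
  then have "(1/2)^2 \<le> ln (2 + \<bar>a\<bar>)" by (simp add: power2_eq_square)
  then have "1/2 \<le> sqrt (ln (2 + \<bar>a\<bar>))"
    by (rule real_le_rsqrt)
  then have "a^2 * (1/2) \<le> a^2 * sqrt (ln (2 + \<bar>a\<bar>))" by (intro mult_left_mono) auto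
  then show ?thesis unfolding B2_def by simp
qed

lemma pt1: "\<bar>a*b\<bar> \<le> 2 * (B2 \<bar>a\<bar> + B2 \<bar>b\<bar>)"
proof -
  have "0 \<le> (\<bar>a\<bar> - \<bar>b\<bar>)^2" by simp
  then have "2 * (\<bar>a\<bar> * \<bar>b\<bar>) \<le> a^2 + b^2" by (simp add: power2_diff power2_abs)
  moreover have "0 \<le> \<bar>a\<bar> * \<bar>b\<bar>" by simp
  ultimately have "\<bar>a*b\<bar> \<le> a^2 + b^2" unfolding abs_mult by linarith
  then show ?thesis using sq_le[of a] sq_le[of b] unfolding distrib_left by linarith
qed

lemma pt2: assumes "c > 0"
  shows "zyg_A 1 (1/2) (\<bar>a*b\<bar>/(4*c^2)) \<le> (B2 (\<bar>a\<bar>/c) + B2 (\<bar>b\<bar>/c))/2"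
proof -
  define u where "u = \<bar>a\<bar>/c/2"
  define v where "v = \<bar>b\<bar>/c/2"
  have uv0: "0 \<le> u" "0 \<le> v" using assms by (simp_all add: u_def v_def)
  have uv: "\<bar>a*b\<bar>/(4*c^2) = u * v" using assms by (simp add: u_def v_def abs_mult power2_eq_square)
  have "zyg_A 1 (1/2) (\<bar>a*b\<bar>/(4*c^2)) = u * v * sqrt (ln (2 + u * v))"
    using assms by (simp add: uv A1_eq u_def v_def)
  also have "\<dots> \<le> 2 * (B2 u + B2 v)" using key[OF uv0] .
  also have "B2 u \<le> B2 (\<bar>a\<bar>/c) / 4" using B2_scale[of "\<bar>a\<bar>/c" 2] assms by (simp add: u_def)
  also have "B2 v \<le> B2 (\<bar>b\<bar>/c) / 4" using B2_scale[of "\<bar>b\<bar>/c" 2] assms by (simp add: v_def)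
  finally show ?thesis by simp
qed


lemma meas_B2: assumes "f \<in> borel_measurable M" "c > 0"
  shows "(\<lambda>x. B2 (\<bar>f x\<bar>/c)) \<in> borel_measurable M"
proof -
  have "continuous_on UNIV (\<lambda>t::real. B2 (\<bar>t\<bar>/c))"
  proof -
    have pos: "2 + \<bar>t\<bar>/c \<noteq> 0" for t
      using assms(2) by (metis abs_ge_zero add_pos_nonneg divide_nonneg_pos less_irrefl zero_less_numeral)
    show ?thesis unfolding B2_def
      by (intro continuous_intros) (use pos assms(2) in auto)
  qed
  then have "(\<lambda>t::real. B2 (\<bar>t\<bar>/c)) \<in> borel_measurable borel"
    by (rule borel_measurable_continuous_onI)
  from measurable_compose[OF assms(1) this] show ?thesis .
qed

lemma meas_B2': assumes "f \<in> borel_measurable M"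
  shows "(\<lambda>x. B2 \<bar>f x\<bar>) \<in> borel_measurable M"
  using meas_B2[OF assms, of 1] by simp

lemma meas_enn: "h \<in> borel_measurable M \<Longrightarrow> (\<lambda>x. ennreal (h x)) \<in> borel_measurable M"
  by measurable

lemma nn_bound:
  assumes "f \<in> borel_measurable M" "g \<in> borel_measurable M"
    "\<And>x. 0 \<le> f x" "\<And>x. 0 \<le> g x" "\<And>x. h x \<le> C * (f x + g x)" "0 \<le> C"
  shows "(\<integral>\<^sup>+x. ennreal (h x) \<partial>M) \<le> ennreal C * ((\<integral>\<^sup>+x. ennreal (f x) \<partial>M) + (\<integral>\<^sup>+x. ennreal (g x) \<partial>M))"
proof -
  have "(\<integral>\<^sup>+x. ennreal (h x) \<partial>M) \<le> (\<integral>\<^sup>+x. ennreal C * (ennreal (f x) + ennreal (g x)) \<partial>M)"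
  proof (rule nn_integral_mono)
    fix x
    have "ennreal (h x) \<le> ennreal (C * (f x + g x))" by (rule ennreal_leI) (rule assms(5))
    also have "\<dots> = ennreal C * (ennreal (f x) + ennreal (g x))"
      using assms(3,4,6) by (simp add: ennreal_mult'' ennreal_plus[symmetric] del: ennreal_plus)
    finally show "ennreal (h x) \<le> ennreal C * (ennreal (f x) + ennreal (g x))" .
  qed
  also have "\<dots> = ennreal C * ((\<integral>\<^sup>+x. ennreal (f x) \<partial>M) + (\<integral>\<^sup>+x. ennreal (g x) \<partial>M))"
    using assms(1,2) by (simp add: nn_integral_cmult nn_integral_add)
  finally show ?thesis .
qed

lemma zyg_parts:
  assumes "in_zygmund 2 (1/4) f"
  shows "f \<in> borel_measurable lebesgue"
    and "(\<integral>\<^sup>+x. ennreal (B2 \<bar>f x\<bar>) \<partial>lebesgue) < \<infinity>"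
  using assms unfolding in_zygmund_def by (auto simp: A2_eq)

lemma norm_facts:
  assumes "in_zygmund 2 (1/4) f"
  shows "0 \<le> zyg_norm 2 (1/4) f"
    and "\<And>c. c > zyg_norm 2 (1/4) f \<Longrightarrow> (\<integral>\<^sup>+x. ennreal (B2 (\<bar>f x\<bar>/c)) \<partial>lebesgue) \<le> 1"
proof -
  define S where "S = {k. k > 0 \<and> (\<integral>\<^sup>+ x. ennreal (zyg_A 2 (1/4) (\<bar>f x\<bar> / k)) \<partial>lebesgue) \<le> 1}"
  have N: "zyg_norm 2 (1/4) f = Inf S" unfolding S_def zyg_norm_def ..
  have fm: "f \<in> borel_measurable lebesgue" and fI: "(\<integral>\<^sup>+x. ennreal (B2 \<bar>f x\<bar>) \<partial>lebesgue) < \<infinity>"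
    using zyg_parts[OF assms] by auto
  have Sk: "k \<in> S \<longleftrightarrow> k > 0 \<and> (\<integral>\<^sup>+ x. ennreal (B2 (\<bar>f x\<bar> / k)) \<partial>lebesgue) \<le> 1" for k
    unfolding S_def by (auto simp: A2_eq)
  define r where "r = enn2real (\<integral>\<^sup>+x. ennreal (B2 \<bar>f x\<bar>) \<partial>lebesgue)"
  have r: "(\<integral>\<^sup>+x. ennreal (B2 \<bar>f x\<bar>) \<partial>lebesgue) = ennreal r" "0 \<le> r"
    using fI by (auto simp: r_def)
  define k where "k = r + 1"
  have k1: "1 \<le> k" using r by (simp add: k_def)
  have "(\<integral>\<^sup>+ x. ennreal (B2 (\<bar>f x\<bar> / k)) \<partial>lebesgue) \<le> (\<integral>\<^sup>+ x. ennreal (1/k^2) * ennreal (B2 \<bar>f x\<bar>) \<partial>lebesgue)"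
  proof (rule nn_integral_mono)
    fix x
    have "B2 (\<bar>f x\<bar> / k) \<le> (1/k^2) * B2 \<bar>f x\<bar>" using B2_scale[of "\<bar>f x\<bar>" k] k1 by simp
    then show "ennreal (B2 (\<bar>f x\<bar> / k)) \<le> ennreal (1/k^2) * ennreal (B2 \<bar>f x\<bar>)"
      by (simp add: ennreal_mult''[symmetric] B2_nonneg ennreal_leI)
  qed
  also have "\<dots> = ennreal (1/k^2) * ennreal r"
    using fm by (subst nn_integral_cmult) (auto simp: r(1) intro!: meas_enn meas_B2')
  also have "\<dots> = ennreal (r / k^2)" using r by (simp add: ennreal_mult''[symmetric])
  also have "\<dots> \<le> 1"
  proof -
    have "k \<le> k^2" using k1 by (simp add: power2_eq_square)
    then have "r \<le> k^2" unfolding k_def by linarith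
    then show ?thesis using k1 by (simp add: divide_le_eq)
  qed
  finally have "k \<in> S" using Sk k1 by simp
  then have Sne: "S \<noteq> {}" by auto
  show nn: "0 \<le> zyg_norm 2 (1/4) f" unfolding N
    by (rule cInf_greatest[OF Sne]) (auto simp: Sk)
  fix c assume c: "c > zyg_norm 2 (1/4) f"
  then obtain k' where k': "k' \<in> S" "k' < c" unfolding N using cInf_lessD[OF Sne] by blast
  have "(\<integral>\<^sup>+x. ennreal (B2 (\<bar>f x\<bar>/c)) \<partial>lebesgue) \<le> (\<integral>\<^sup>+ x. ennreal (B2 (\<bar>f x\<bar> / k')) \<partial>lebesgue)"
  proof (rule nn_integral_mono)
    fix x
    have "\<bar>f x\<bar>/c \<le> \<bar>f x\<bar>/k'" using k' Sk by (intro divide_left_mono) auto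
    then show "ennreal (B2 (\<bar>f x\<bar>/c)) \<le> ennreal (B2 (\<bar>f x\<bar> / k'))"
      using k' Sk c by (intro ennreal_leI B2_mono) auto
  qed
  also have "\<dots> \<le> 1" using k' Sk by auto
  finally show "(\<integral>\<^sup>+x. ennreal (B2 (\<bar>f x\<bar>/c)) \<partial>lebesgue) \<le> 1" .
qed


theorem lemma4p1:
  fixes \<alpha> \<beta> :: "real^2 \<Rightarrow> real"
  assumes "in_zygmund 2 (1/4) \<alpha>" and "in_zygmund 2 (1/4) \<beta>"
  shows "in_zygmund 1 (1/2) (\<lambda>x. \<alpha> x * \<beta> x) \<and>
         zyg_norm 1 (1/2) (\<lambda>x. \<alpha> x * \<beta> x)
           \<le> 4 * (max (zyg_norm 2 (1/4) \<alpha>) (zyg_norm 2 (1/4) \<beta>))\<^sup>2"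
proof -
  note am = zyg_parts(1)[OF assms(1)] and aI = zyg_parts(2)[OF assms(1)]
  note bm = zyg_parts(1)[OF assms(2)] and bI = zyg_parts(2)[OF assms(2)]
  have abm: "(\<lambda>x. \<alpha> x * \<beta> x) \<in> borel_measurable lebesgue" using am bm by measurable
  have sumfin: "ennreal 2 * ((\<integral>\<^sup>+x. ennreal (B2 \<bar>\<alpha> x\<bar>) \<partial>lebesgue) + (\<integral>\<^sup>+x. ennreal (B2 \<bar>\<beta> x\<bar>) \<partial>lebesgue)) < \<infinity>"
    using aI bI by (simp add: ennreal_mult_less_top)
  have "(\<integral>\<^sup>+x. ennreal (norm (\<alpha> x * \<beta> x)) \<partial>lebesgue) \<le> ennreal 2 * ((\<integral>\<^sup>+x. ennreal (B2 \<bar>\<alpha> x\<bar>) \<partial>lebesgue) + (\<integral>\<^sup>+x. ennreal (B2 \<bar>\<beta> x\<bar>) \<partial>lebesgue))"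
  proof (rule nn_bound)
    fix x
    show "norm (\<alpha> x * \<beta> x) \<le> 2 * (B2 \<bar>\<alpha> x\<bar> + B2 \<bar>\<beta> x\<bar>)"
      using pt1[of "\<alpha> x" "\<beta> x"] by simp
  qed (auto intro!: meas_B2' am bm B2_nonneg)
  then have "(\<integral>\<^sup>+x. ennreal (norm (\<alpha> x * \<beta> x)) \<partial>lebesgue) < \<infinity>"
    using sumfin by (rule le_less_trans)
  then have intab: "integrable lebesgue (\<lambda>x. \<alpha> x * \<beta> x)"
    using abm by (intro integrableI_bounded) auto
  have setint: "\<forall>K. compact K \<longrightarrow> set_integrable lebesgue K (\<lambda>x. \<alpha> x * \<beta> x)"
  proof (intro allI impI)
    fix K :: "(real^2) set" assume "compact K"
    then have "K \<in> sets lebesgue" using lmeasurable_compact fmeasurableD by blast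
    then show "set_integrable lebesgue K (\<lambda>x. \<alpha> x * \<beta> x)"
      unfolding set_integrable_def using intab by (rule integrable_mult_indicator)
  qed
  have "(\<integral>\<^sup>+x. ennreal (zyg_A 1 (1/2) \<bar>\<alpha> x * \<beta> x\<bar>) \<partial>lebesgue) \<le> ennreal 2 * ((\<integral>\<^sup>+x. ennreal (B2 \<bar>\<alpha> x\<bar>) \<partial>lebesgue) + (\<integral>\<^sup>+x. ennreal (B2 \<bar>\<beta> x\<bar>) \<partial>lebesgue))"
  proof (rule nn_bound)
    fix x
    show "zyg_A 1 (1/2) \<bar>\<alpha> x * \<beta> x\<bar> \<le> 2 * (B2 \<bar>\<alpha> x\<bar> + B2 \<bar>\<beta> x\<bar>)"
      using key[of "\<bar>\<alpha> x\<bar>" "\<bar>\<beta> x\<bar>"] by (simp add: A1_eq abs_mult)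
  qed (auto intro!: meas_B2' am bm B2_nonneg)
  then have "(\<integral>\<^sup>+x. ennreal (zyg_A 1 (1/2) \<bar>\<alpha> x * \<beta> x\<bar>) \<partial>lebesgue) < \<infinity>"
    using sumfin by (rule le_less_trans)
  then have part1: "in_zygmund 1 (1/2) (\<lambda>x. \<alpha> x * \<beta> x)"
    unfolding in_zygmund_def using abm setint by auto
  define N where "N = max (zyg_norm 2 (1/4) \<alpha>) (zyg_norm 2 (1/4) \<beta>)"
  have N0: "0 \<le> N" using norm_facts(1)[OF assms(1)] by (simp add: N_def)
  define T where "T = {k. k > 0 \<and> (\<integral>\<^sup>+ x. ennreal (zyg_A 1 (1/2) (\<bar>\<alpha> x * \<beta> x\<bar> / k)) \<partial>lebesgue) \<le> 1}"
  have bdd: "bdd_below T" unfolding T_def by (rule bdd_belowI[of _ 0]) auto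
  have less: "zyg_norm 1 (1/2) (\<lambda>x. \<alpha> x * \<beta> x) \<le> 4 * c^2" if c: "c > N" for c
  proof -
    have c0: "c > 0" using c N0 by linarith
    have ca: "(\<integral>\<^sup>+x. ennreal (B2 (\<bar>\<alpha> x\<bar>/c)) \<partial>lebesgue) \<le> 1"
      using norm_facts(2)[OF assms(1)] c by (simp add: N_def)
    have cb: "(\<integral>\<^sup>+x. ennreal (B2 (\<bar>\<beta> x\<bar>/c)) \<partial>lebesgue) \<le> 1"
      using norm_facts(2)[OF assms(2)] c by (simp add: N_def)
    have "(\<integral>\<^sup>+x. ennreal (zyg_A 1 (1/2) (\<bar>\<alpha> x * \<beta> x\<bar> / (4*c^2))) \<partial>lebesgue) \<le> ennreal (1/2) * ((\<integral>\<^sup>+x. ennreal (B2 (\<bar>\<alpha> x\<bar>/c)) \<partial>lebesgue) + (\<integral>\<^sup>+x. ennreal (B2 (\<bar>\<beta> x\<bar>/c)) \<partial>lebesgue))"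
    proof (rule nn_bound)
      fix x
      show "zyg_A 1 (1/2) (\<bar>\<alpha> x * \<beta> x\<bar> / (4*c^2)) \<le> 1/2 * (B2 (\<bar>\<alpha> x\<bar>/c) + B2 (\<bar>\<beta> x\<bar>/c))"
        using pt2[OF c0, of "\<alpha> x" "\<beta> x"] by simp
    next
      show "(\<lambda>x. B2 (\<bar>\<alpha> x\<bar>/c)) \<in> borel_measurable lebesgue" by (rule meas_B2[OF am c0])
    next
      show "(\<lambda>x. B2 (\<bar>\<beta> x\<bar>/c)) \<in> borel_measurable lebesgue" by (rule meas_B2[OF bm c0])
    next
      fix x show "0 \<le> B2 (\<bar>\<alpha> x\<bar>/c)" using c0 by (intro B2_nonneg) simp
    next
      fix x show "0 \<le> B2 (\<bar>\<beta> x\<bar>/c)" using c0 by (intro B2_nonneg) simp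
    qed simp
    also have "\<dots> \<le> ennreal (1/2) * (1 + 1)"
      using ca cb by (intro mult_left_mono add_mono) auto
    also have "\<dots> = 1"
    proof -
      have "(1::ennreal) + 1 = ennreal 2" by simp
      then have "ennreal (1/2) * (1 + 1) = ennreal (1/2 * 2)" by (simp only: ennreal_mult'')
      then show ?thesis by simp
    qed
    finally have "4*c^2 \<in> T" unfolding T_def using c0 by auto
    then show ?thesis unfolding zyg_norm_def T_def[symmetric] using bdd by (rule cInf_lower)
  qed
  have "zyg_norm 1 (1/2) (\<lambda>x. \<alpha> x * \<beta> x) \<le> 4 * N^2"
  proof (rule ccontr)
    let ?X = "zyg_norm 1 (1/2) (\<lambda>x. \<alpha> x * \<beta> x)"
    assume "\<not> ?X \<le> 4 * N^2"
    then have X: "4 * N^2 < ?X" by simp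
    have "N < sqrt ?X / 2"
    proof -
      have "(2*N)^2 < ?X" using X by (simp add: power_mult_distrib)
      then have "2*N < sqrt ?X" using N0 real_less_rsqrt by blast
      then show ?thesis by simp
    qed
    then obtain c where c1: "N < c" and c2: "c < sqrt ?X / 2" using dense by blast
    have "0 \<le> 4 * N^2" by simp
    then have X0: "0 \<le> ?X" using X by linarith
    have "2*c < sqrt ?X" using c2 by simp
    then have "(2*c)^2 < (sqrt ?X)^2" using c1 N0 by (intro power_strict_mono) auto
    then have "4*c^2 < ?X" using X0 by (simp add: power_mult_distrib)
    with less[OF c1] show False by simp
  qed
  with part1 show ?thesis by (simp add: N_def)
qed

end
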